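(* Let $S_0,S_1$ be semi-infinite stacks that are neighbors. Then for every finite word $W$ in $\Theta$, the stacks $\overline{S_0W}$ and $\overline{S_1W}$ are neighbors.
   Context: Fix an integer $k\ge 2$. Let $\Theta=\{b_1,\dots,b_k,o_1,\dots,o_k,F\}$, where $b_i$ is a burger of type $i$, $o_i$ is an order of type $i$, and $F$ is a flexible order. A semi-infinite stack is an infinite sequence of burgers indexed to the left, i.e. of the form $\cdots s_3s_2s_1$ with $s_1$ the rightmost (top) burger. For a stack $S$ and a finite word $W$, $\overline{SW}$ is obtained by processing $W$ left to right: - a burger is appended on the right; - $o_i$ removes the rightmost $b_i$ present at that time; - $F$ removes the rightmost burger present at that time. (Assume the stacks contain infinitely many burgers of each type, so that every order can be fulfilled.) Two semi-infinite stacks are neighbors if one can be obtained from the other by deleting a single burger, at an arbitrary position. *)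

theory Defs
  imports Main
begin

text \<open>Letters of the alphabet Theta: Bur i is the burger b_i, Ord i is the order o_i,
  Flex is the flexible order F.  Types range over {1..k}.\<close>
datatype letter = Bur nat | Ord nat | Flex

text \<open>A semi-infinite stack ... s_3 s_2 s_1 is a function nat => nat, where
  s 0 is the rightmost (top) burger s_1, s 1 is s_2, etc.; the value is the burger type.\<close>
type_synonym stack = "nat \<Rightarrow> nat"

definition del_at :: "stack \<Rightarrow> nat \<Rightarrow> stack" where
  "del_at s m = (\<lambda>n. if n < m then s n else s (Suc n))"

definition push :: "stack \<Rightarrow> nat \<Rightarrow> stack" where
  "push s i = (\<lambda>n. if n = 0 then i else s (n - 1))"

definition step :: "stack \<Rightarrow> letter \<Rightarrow> stack" where
  "step s c = (case c of
      Bur i \<Rightarrow> push s i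
    | Ord i \<Rightarrow> del_at s (LEAST n. s n = i)
    | Flex \<Rightarrow> del_at s 0)"

definition process :: "stack \<Rightarrow> letter list \<Rightarrow> stack" where
  "process s w = foldl step s w"

definition neighbors :: "stack \<Rightarrow> stack \<Rightarrow> bool" where
  "neighbors s t \<longleftrightarrow> (\<exists>m. t = del_at s m \<or> s = del_at t m)"

definition valid_stack :: "nat \<Rightarrow> stack \<Rightarrow> bool" where
  "valid_stack k s \<longleftrightarrow> (\<forall>n. s n \<in> {1..k}) \<and> (\<forall>i\<in>{1..k}. infinite {n. s n = i})"

definition valid_letter :: "nat \<Rightarrow> letter \<Rightarrow> bool" where
  "valid_letter k c = (case c of Bur i \<Rightarrow> i \<in> {1..k} | Ord i \<Rightarrow> i \<in> {1..k} | Flex \<Rightarrow> True)"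

end

theory Submission
  imports Defs
begin

definition occ :: "stack \<Rightarrow> nat \<Rightarrow> bool" where
  "occ s i \<longleftrightarrow> (\<forall>N. \<exists>n\<ge>N. s n = i)"

lemma del_comm: "a < b \<Longrightarrow> del_at (del_at s b) a = del_at (del_at s a) (b - 1)"
  by (auto simp: del_at_def fun_eq_iff)

lemma occ_del: "occ s i \<Longrightarrow> occ (del_at s m) i"
  unfolding occ_def
proof (intro allI)
  fix N assume h: "\<forall>N. \<exists>n\<ge>N. s n = i"
  then obtain n where "n \<ge> N + m + 1" "s n = i" by blast
  then show "\<exists>n\<ge>N. del_at s m n = i"
    by (intro exI[of _ "n - 1"]) (auto simp: del_at_def)
qed

lemma occ_push: "occ s i \<Longrightarrow> occ (push s j) i"
  unfolding occ_def
proof (intro allI)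
  fix N assume h: "\<forall>N. \<exists>n\<ge>N. s n = i"
  then obtain n where "n \<ge> N" "s n = i" by blast
  then show "\<exists>n\<ge>N. push s j n = i"
    by (intro exI[of _ "Suc n"]) (auto simp: push_def)
qed

lemma occ_step: "occ s i \<Longrightarrow> occ (step s c) i"
  by (cases c) (auto simp: step_def occ_del occ_push)

lemma occ_ex: "occ s i \<Longrightarrow> \<exists>n. s n = i"
  unfolding occ_def by blast

lemma step_nb:
  assumes t: "t = del_at s m"
    and oc: "\<And>i. c = Ord i \<Longrightarrow> \<exists>n. t n = i"
  shows "\<exists>m'. step t c = del_at (step s c) m'"
proof (cases c)
  case (Bur i)
  have "push t i = del_at (push s i) (Suc m)"
    by (auto simp: t push_def del_at_def fun_eq_iff)
  then show ?thesis using Bur by (auto simp: step_def)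
next
  case Flex
  show ?thesis
  proof (cases "m = 0")
    case True
    then show ?thesis using Flex t by (auto simp: step_def)
  next
    case False
    then have "del_at t 0 = del_at (del_at s 0) (m - 1)" using t del_comm[of 0 m s] by simp
    then show ?thesis using Flex by (auto simp: step_def)
  qed
next
  case (Ord i)
  obtain n0 where n0: "t n0 = i" using oc Ord by blast
  define l where "l = (LEAST n. s n = i)"
  have sex: "\<exists>n. s n = i"
    using n0 t by (auto simp: del_at_def split: if_splits)
  have sl: "s l = i" unfolding l_def using sex by (rule LeastI_ex)
  have lmin: "\<And>n. n < l \<Longrightarrow> s n \<noteq> i" unfolding l_def using not_less_Least by blast
  have ss: "step s c = del_at s l" using Ord by (simp add: step_def l_def)
  consider "m = l" | "m < l" | "l < m" by linarith
  then show ?thesis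
  proof cases
    case 1
    then show ?thesis using Ord ss t by (auto simp: step_def)
  next
    case 2
    have "(LEAST n. t n = i) = l - 1"
    proof (rule Least_equality)
      show "t (l - 1) = i" using 2 sl by (auto simp: t del_at_def)
      fix y assume "t y = i"
      then show "l - 1 \<le> y" using 2 lmin
        proof (cases "y < m")
        case True then show ?thesis using \<open>t y = i\<close> 2 lmin[of y] by (simp add: t del_at_def)
      next
        case False
        then have "s (Suc y) = i" using \<open>t y = i\<close> by (simp add: t del_at_def)
        then have "\<not> Suc y < l" using lmin by blast
        then show ?thesis by simp
      qed
    qed
    then have "step t c = del_at (del_at s m) (l - 1)" using Ord by (simp add: step_def t)
    also have "\<dots> = del_at (del_at s l) m" using del_comm[OF 2, of s] by simp
    finally show ?thesis using ss by auto
  next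
    case 3
    have "(LEAST n. t n = i) = l"
    proof (rule Least_equality)
      show "t l = i" using 3 sl by (auto simp: t del_at_def)
      fix y assume "t y = i"
      then show "l \<le> y" using 3 lmin
        proof (cases "y < m")
        case True then have "s y = i" using \<open>t y = i\<close> by (simp add: t del_at_def)
        then show ?thesis using lmin[of y] by linarith
      next
        case False then show ?thesis using 3 by simp
      qed
    qed
    then have "step t c = del_at (del_at s m) l" using Ord by (simp add: step_def t)
    also have "\<dots> = del_at (del_at s l) (m - 1)" using del_comm[OF 3, of s] by simp
    finally show ?thesis using ss by auto
  qed
qed

lemma main:
  assumes "t = del_at s m"
    and "\<forall>i\<in>{1..k}. occ t i"
    and "\<forall>c\<in>set W. valid_letter k c"
  shows "\<exists>m'. process t W = del_at (process s W) m'"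
  using assms
proof (induction W arbitrary: s t m)
  case Nil
  then show ?case by (auto simp: process_def)
next
  case (Cons c W)
  have "\<exists>m'. step t c = del_at (step s c) m'"
  proof (rule step_nb[OF Cons.prems(1)])
    fix i assume "c = Ord i"
    then have "i \<in> {1..k}" using Cons.prems(3) by (auto simp: valid_letter_def)
    then show "\<exists>n. t n = i" using Cons.prems(2) occ_ex by blast
  qed
  then obtain m' where m': "step t c = del_at (step s c) m'" by blast
  have "\<forall>i\<in>{1..k}. occ (step t c) i" using Cons.prems(2) occ_step by blast
  from Cons.IH[OF m' this] Cons.prems(3)
  show ?case by (simp add: process_def)
qed

lemma inf_unb: "infinite (S::nat set) \<Longrightarrow> \<exists>n\<ge>N. n \<in> S"
proof (rule ccontr)
  assume "infinite S" "\<not> (\<exists>n\<ge>N. n \<in> S)"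
  then have "S \<subseteq> {..<N}" by (auto simp: not_le)
  then show False using \<open>infinite S\<close> finite_subset by blast
qed

lemma valid_occ: "valid_stack k s \<Longrightarrow> \<forall>i\<in>{1..k}. occ s i"
  unfolding valid_stack_def occ_def
  using inf_unb by blast

theorem lemma5p3:
  fixes k :: nat and S0 S1 :: stack and W :: "letter list"
  assumes "k \<ge> 2"
    and "valid_stack k S0" and "valid_stack k S1"
    and "neighbors S0 S1"
    and "\<forall>c\<in>set W. valid_letter k c"
  shows "neighbors (process S0 W) (process S1 W)"
proof -
  obtain m where "S1 = del_at S0 m \<or> S0 = del_at S1 m" using assms(4) neighbors_def by blast
  then show ?thesis
  proof
    assume h: "S1 = del_at S0 m"
    from main[OF h valid_occ[OF assms(3)] assms(5)] show ?thesis
      unfolding neighbors_def by blast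
  next
    assume h: "S0 = del_at S1 m"
    from main[OF h valid_occ[OF assms(2)] assms(5)] show ?thesis
      unfolding neighbors_def by blast
  qed
qed

end
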